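(* Let $F$ be a finite field with $q$ elements, let $C\subseteq F^n$ be a balanced code with information length $d$, and let $B$ be a non-empty subset of $C$. Let $\omega=\frac{\sum_{\mathbf{b}\in B}\mathrm{w}(\mathbf{b})}{n|B|}$ be the average relative weight of $B$. If $0\le\omega\le 1-q^{-1}$, then $|B|\le q^{d\,h_q(\omega)}$.
   Context: $\mathrm{w}$ denotes Hamming weight. For $I=\{1,\dots,n\}$ and a subset $I'=\{i_1<\dots<i_d\}$, the projection $F^I\to F^{I'}$ sends $(a_1,\dots,a_n)$ to $(a_{i_1},\dots,a_{i_d})$. A subset $C\subseteq F^n$ is a balanced code with information length $d$ if there exist subsets $I_1,\dots,I_s$ of $I$ (repetitions allowed), each of cardinality $d$, and an integer $t$ such that (i) every index $i\in I$ lies in exactly $t$ of the sets $I_j$; (ii) for each $j$, the projection $F^I\to F^{I_j}$ maps $C$ bijectively onto $F^{I_j}$. The $q$-ary entropy is $h_q(x)=x\log_q(q-1)-x\log_q x-(1-x)\log_q(1-x)$ with $0\log_q0=0$. *)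

theory Defs
  imports "HOL-Library.FuncSet" Complex_Main
begin

text \<open>Vectors in F^n are modelled as extensional functions on the index set
  {0..<n} (i.e. elements of PiE {..<n} (\<lambda>_. UNIV)).\<close>


definition space :: "'i set \<Rightarrow> ('i \<Rightarrow> 'f) set" where
  "space J = PiE J (\<lambda>_. UNIV)"

definition hweight :: "nat \<Rightarrow> (nat \<Rightarrow> 'f::zero) \<Rightarrow> nat" where
  "hweight n x = card {i \<in> {..<n}. x i \<noteq> 0}"

definition proj :: "nat set \<Rightarrow> (nat \<Rightarrow> 'f) \<Rightarrow> (nat \<Rightarrow> 'f)" where
  "proj J x = restrict x J"

definition balanced_code :: "nat \<Rightarrow> nat \<Rightarrow> (nat \<Rightarrow> 'f) set \<Rightarrow> bool" where
  "balanced_code n d C \<longleftrightarrow> C \<subseteq> space {..<n} \<and>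
     (\<exists>s t (Is :: nat \<Rightarrow> nat set). s \<ge> 1 \<and>
        (\<forall>j<s. Is j \<subseteq> {..<n} \<and> card (Is j) = d) \<and>
        (\<forall>i<n. card {j. j < s \<and> i \<in> Is j} = t) \<and>
        (\<forall>j<s. bij_betw (proj (Is j)) C (space (Is j))))"

definition xlogx :: "real \<Rightarrow> real \<Rightarrow> real" where
  "xlogx q x = (if x = 0 then 0 else x * log q x)"

definition entropy_q :: "real \<Rightarrow> real \<Rightarrow> real" where
  "entropy_q q x = x * log q (q - 1) - xlogx q x - xlogx q (1 - x)"

end

theory Submission
  imports Defs
begin

definition wt :: "nat set \<Rightarrow> (nat \<Rightarrow> 'f::zero) \<Rightarrow> nat" where
  "wt J x = card {i\<in>J. x i \<noteq> 0}"

lemma sum_v: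
  fixes mu :: real
  shows "(\<Sum>v\<in>(UNIV::'f::{zero,finite} set). if v \<noteq> 0 then mu else 1) = 1 + (real (card (UNIV::'f set)) - 1) * mu"
proof -
  have U: "(UNIV::'f set) = insert 0 (UNIV - {0})" by auto
  have "(\<Sum>v\<in>(UNIV::'f set). if v \<noteq> 0 then mu else 1) = 1 + (\<Sum>v\<in>UNIV - {0::'f}. if v \<noteq> 0 then mu else 1)"
    by (subst U, subst sum.insert) (auto intro: sum.cong)
  also have "(\<Sum>v\<in>UNIV - {0}. if v \<noteq> (0::'f) then mu else 1) = (\<Sum>v\<in>UNIV - {0::'f}. mu)"
    by (rule sum.cong) auto
  also have "\<dots> = real (card (UNIV::'f set) - 1) * mu" by (simp add: card_Diff_singleton)
  also have "real (card (UNIV::'f set) - 1) = real (card (UNIV::'f set)) - 1"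
    using card_gt_0_iff[of "UNIV::'f set"] by (simp add: of_nat_diff)
  finally show ?thesis .
qed

lemma sum_space:
  fixes mu :: real
  assumes "finite J"
  shows "(\<Sum>x\<in>space J. mu ^ wt J (x :: nat \<Rightarrow> 'f::{zero,finite})) = (1 + (real (card (UNIV::'f set)) - 1) * mu) ^ card J"
proof -
  have E: "\<And>x. mu ^ wt J (x :: nat \<Rightarrow> 'f) = (\<Prod>i\<in>J. if x i \<noteq> 0 then mu else 1)"
    unfolding wt_def using assms by (simp add: prod.inter_filter[symmetric])
  have "(\<Sum>x\<in>space J. mu ^ wt J (x :: nat \<Rightarrow> 'f)) = (\<Sum>x\<in>PiE J (\<lambda>_. UNIV::'f set). \<Prod>i\<in>J. if x i \<noteq> 0 then mu else 1)"
    unfolding space_def by (rule sum.cong[OF refl], rule E)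
  also have "\<dots> = (\<Prod>i\<in>J. \<Sum>v\<in>(UNIV::'f set). if v \<noteq> 0 then mu else 1)"
    by (rule prod_sum_PiE[symmetric]) (use assms in auto)
  also have "\<dots> = (1 + (real (card (UNIV::'f set)) - 1) * mu) ^ card J"
    by (simp add: sum_v)
  finally show ?thesis .
qed

lemma amgm:
  fixes a :: "'b \<Rightarrow> real"
  assumes "finite B" "B \<noteq> {}"
  shows "real (card B) * exp ((\<Sum>b\<in>B. a b) / real (card B)) \<le> (\<Sum>b\<in>B. exp (a b))"
proof -
  define m where "m = (\<Sum>b\<in>B. a b) / real (card B)"
  have N: "real (card B) > 0" using assms by (simp add: card_gt_0_iff)
  have "\<And>b. exp m * (1 + (a b - m)) \<le> exp (a b)"
  proof -
    fix b
    have "exp m * (1 + (a b - m)) \<le> exp m * exp (a b - m)"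
      by (rule mult_left_mono) (auto simp: exp_ge_add_one_self)
    thus "exp m * (1 + (a b - m)) \<le> exp (a b)" by (simp add: exp_diff)
  qed
  hence "(\<Sum>b\<in>B. exp m * (1 + (a b - m))) \<le> (\<Sum>b\<in>B. exp (a b))" by (rule sum_mono)
  moreover have "(\<Sum>b\<in>B. exp m * (1 + (a b - m))) = exp m * (real (card B) + (\<Sum>b\<in>B. a b) - real (card B) * m)"
    by (simp add: sum_distrib_left[symmetric] sum.distrib sum_subtractf)
  moreover have "real (card B) * m = (\<Sum>b\<in>B. a b)" using N by (simp add: m_def)
  ultimately show ?thesis by (simp add: m_def mult.commute)
qed

lemma double_count:
  "(\<Sum>j<s. card {i\<in>{..<n::nat}. P j i}) = (\<Sum>i<n. card {j\<in>{..<s::nat}. P j i})"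
proof -
  have "(\<Sum>j<s. card {i\<in>{..<n::nat}. P j i}) = (\<Sum>j<s. \<Sum>i<n. if P j i then 1 else (0::nat))"
    by (auto simp: sum.If_cases intro!: sum.cong arg_cong[where f=card])
  also have "\<dots> = (\<Sum>i<n. \<Sum>j<s. if P j i then 1 else (0::nat))" by (rule sum.swap)
  also have "\<dots> = (\<Sum>i<n. card {j\<in>{..<s::nat}. P j i})"
    by (auto simp: sum.If_cases intro!: sum.cong arg_cong[where f=card])
  finally show ?thesis .
qed

lemma wt_sum:
  assumes "\<forall>j<(s::nat). Is j \<subseteq> {..<n}" "\<forall>i<n. card {j. j < s \<and> i \<in> Is j} = t"
  shows "(\<Sum>j<s. wt (Is j) (b :: nat \<Rightarrow> 'f::zero)) = t * hweight n b"
proof -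
  have "(\<Sum>j<s. wt (Is j) b) = (\<Sum>j<s. card {i\<in>{..<n}. i \<in> Is j \<and> b i \<noteq> 0})"
    unfolding wt_def using assms(1) by (intro sum.cong refl arg_cong[where f=card]) auto
  also have "\<dots> = (\<Sum>i<n. card {j\<in>{..<s}. i \<in> Is j \<and> b i \<noteq> 0})" by (rule double_count[where P="\<lambda>j i. i \<in> Is j \<and> b i \<noteq> 0"])
  also have "\<dots> = (\<Sum>i<n. if b i \<noteq> 0 then t else 0)"
  proof (rule sum.cong[OF refl])
    fix i assume "i \<in> {..<n}"
    hence "card {j. j < s \<and> i \<in> Is j} = t" using assms(2) by auto
    thus "card {j\<in>{..<s}. i \<in> Is j \<and> b i \<noteq> 0} = (if b i \<noteq> 0 then t else 0)"
      by auto
  qed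
  also have "\<dots> = t * hweight n b"
    unfolding hweight_def by (simp add: sum.If_cases Int_def)
  finally show ?thesis .
qed

lemma card_sum:
  assumes "\<forall>j<(s::nat). Is j \<subseteq> {..<n} \<and> card (Is j) = d" "\<forall>i<n. card {j. j < s \<and> i \<in> Is j} = t"
  shows "s * d = t * n"
proof -
  have "s * d = (\<Sum>j<s. card {i\<in>{..<n}. i \<in> Is j})"
  proof -
    have "(\<Sum>j<s. card {i\<in>{..<n}. i \<in> Is j}) = (\<Sum>j<s. d)"
    proof (rule sum.cong[OF refl])
      fix j assume "j \<in> {..<s}"
      hence "{i\<in>{..<n}. i \<in> Is j} = Is j" "card (Is j) = d" using assms(1) by auto
      thus "card {i\<in>{..<n}. i \<in> Is j} = d" by simp
    qed
    thus ?thesis by simp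
  qed
  also have "\<dots> = (\<Sum>i<n. card {j\<in>{..<s}. i \<in> Is j})" by (rule double_count[where P="\<lambda>j i. i \<in> Is j"])
  also have "\<dots> = (\<Sum>i<n. t)"
    using assms(2) by (intro sum.cong refl) (auto intro: arg_cong[where f=card])
  finally show ?thesis by simp
qed

lemma proj_bound:
  fixes mu :: real and B C :: "(nat \<Rightarrow> 'f::{zero,finite}) set"
  assumes "bij_betw (proj J) C (space J)" "B \<subseteq> C" "finite J" "mu > 0"
  shows "(\<Sum>b\<in>B. mu ^ wt J b) \<le> (1 + (real (card (UNIV::'f set)) - 1) * mu) ^ card J"
proof -
  have wp: "\<And>b. wt J (proj J b) = wt J b" unfolding wt_def proj_def by (auto intro!: arg_cong[where f=card])
  have inj: "inj_on (proj J) B" using assms(1,2) bij_betw_imp_inj_on inj_on_subset by blast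
  have sub: "proj J ` B \<subseteq> space J" using assms(1,2) bij_betw_imp_surj_on by blast
  have fin: "finite (space J :: (nat \<Rightarrow> 'f) set)" unfolding space_def using assms(3) by (simp add: finite_PiE)
  have "(\<Sum>b\<in>B. mu ^ wt J b) = (\<Sum>b\<in>B. mu ^ wt J (proj J b))" by (simp add: wp)
  also have "\<dots> = (\<Sum>x\<in>proj J ` B. mu ^ wt J x)" by (rule sum.reindex[OF inj, symmetric, unfolded comp_def])
  also have "\<dots> \<le> (\<Sum>x\<in>space J. mu ^ wt J (x::nat\<Rightarrow>'f))"
    by (rule sum_mono2[OF fin sub]) (use assms(4) in auto)
  also have "\<dots> = (1 + (real (card (UNIV::'f set)) - 1) * mu) ^ card J"
    by (rule sum_space[OF assms(3)])
  finally show ?thesis .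
qed

lemma proj_log:
  fixes mu :: real and B C :: "(nat \<Rightarrow> 'f::{zero,finite}) set"
  assumes "bij_betw (proj J) C (space J)" "B \<subseteq> C" "finite J" "mu > 0" "finite B" "B \<noteq> {}"
  shows "ln (real (card B)) + ln mu * (\<Sum>b\<in>B. real (wt J b)) / real (card B)
     \<le> real (card J) * ln (1 + (real (card (UNIV::'f set)) - 1) * mu)"
proof -
  have N: "real (card B) > 0" using assms by (simp add: card_gt_0_iff)
  have "real (card B) * exp ((\<Sum>b\<in>B. real (wt J b) * ln mu) / real (card B)) \<le> (\<Sum>b\<in>B. exp (real (wt J b) * ln mu))"
    by (rule amgm[OF assms(5,6)])
  also have "\<dots> = (\<Sum>b\<in>B. mu ^ wt J b)"
    using assms(4) by (simp add: exp_of_nat_mult)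
  also have "\<dots> \<le> (1 + (real (card (UNIV::'f set)) - 1) * mu) ^ card J"
    by (rule proj_bound[OF assms(1-4)])
  finally have ineq: "real (card B) * exp ((\<Sum>b\<in>B. real (wt J b) * ln mu) / real (card B))
      \<le> (1 + (real (card (UNIV::'f set)) - 1) * mu) ^ card J" .
  have pos: "0 < real (card B) * exp ((\<Sum>b\<in>B. real (wt J b) * ln mu) / real (card B))" using N by simp
  have "ln (real (card B) * exp ((\<Sum>b\<in>B. real (wt J b) * ln mu) / real (card B)))
      \<le> ln ((1 + (real (card (UNIV::'f set)) - 1) * mu) ^ card J)"
    using ineq pos by (subst ln_le_cancel_iff) auto
  moreover have "ln (real (card B) * exp ((\<Sum>b\<in>B. real (wt J b) * ln mu) / real (card B)))
      = ln (real (card B)) + ln mu * (\<Sum>b\<in>B. real (wt J b)) / real (card B)"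
  proof -
    have "(\<Sum>b\<in>B. real (wt J b) * ln mu) = ln mu * (\<Sum>b\<in>B. real (wt J b))"
      by (simp add: sum_distrib_left mult.commute)
    thus ?thesis using N by (simp add: ln_mult)
  qed
  moreover have "1 + (real (card (UNIV::'f set)) - 1) * mu > 0"
  proof -
    have "real (card (UNIV::'f set)) \<ge> 1" using card_gt_0_iff[of "UNIV::'f set"] by simp
    thus ?thesis using assms(4) by (simp add: add_pos_nonneg)
  qed
  ultimately show ?thesis by (simp add: ln_realpow)
qed

theorem theorem3p3:
  fixes C B :: "(nat \<Rightarrow> 'f::{field,finite}) set" and n d :: nat
  assumes "balanced_code n d C"
    and "B \<subseteq> C" and "B \<noteq> {}"
    and "0 \<le> (\<Sum>b\<in>B. real (hweight n b)) / (real n * real (card B))"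
    and "(\<Sum>b\<in>B. real (hweight n b)) / (real n * real (card B)) \<le> 1 - 1 / real (card (UNIV :: 'f set))"
  shows "real (card B) \<le> real (card (UNIV :: 'f set)) powr (real d *
           entropy_q (real (card (UNIV :: 'f set))) ((\<Sum>b\<in>B. real (hweight n b)) / (real n * real (card B))))"
proof -
  define q where "q = real (card (UNIV :: 'f set))"
  define N where "N = real (card B)"
  define W where "W = (\<Sum>b\<in>B. real (hweight n b))"
  define w where "w = W / (real n * N)"
  from assms(1) have Csub: "C \<subseteq> space {..<n}" unfolding balanced_code_def by blast
  from assms(1) obtain s t and Is :: "nat \<Rightarrow> nat set" where
    s1: "s \<ge> 1" and Isd: "\<forall>j<s. Is j \<subseteq> {..<n} \<and> card (Is j) = d"
    and cnt: "\<forall>i<n. card {j. j < s \<and> i \<in> Is j} = t"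
    and bij: "\<forall>j<s. bij_betw (proj (Is j)) C (space (Is j))"
    unfolding balanced_code_def by blast
  have finB: "finite B"
    using Csub assms(2) finite_subset[of B "space {..<n}"] unfolding space_def by (auto simp: finite_PiE)
  have Npos: "N > 0" unfolding N_def using finB assms(3) by (simp add: card_gt_0_iff)
  have q2: "q \<ge> 2"
  proof -
    have "{0::'f, 1} \<subseteq> UNIV" by simp
    hence "card {0::'f, 1} \<le> card (UNIV::'f set)" by (intro card_mono) auto
    thus ?thesis unfolding q_def by simp
  qed
  have w_le: "w \<le> 1 - 1 / q" using assms(5) unfolding w_def W_def N_def q_def .
  have w_ge: "0 \<le> w" using assms(4) unfolding w_def W_def N_def q_def .
  have w_lt1: "w < 1" using w_le q2 by (smt (verit) divide_pos_pos)
  show ?thesis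
  proof (cases "w = 0")
    case True
    have "\<forall>b\<in>B. real (hweight n b) = 0"
    proof (cases "n = 0")
      case True thus ?thesis by (simp add: hweight_def)
    next
      case False
      hence "W = 0" using True Npos unfolding w_def by simp
      thus ?thesis unfolding W_def using finB by (subst (asm) sum_nonneg_eq_0_iff) auto
    qed
    hence "\<forall>b\<in>B. b = (\<lambda>i. if i < n then 0 else undefined)"
    proof (intro ballI ext)
      fix b i assume h: "\<forall>b\<in>B. real (hweight n b) = 0" and b: "b \<in> B"
      have "b \<in> space {..<n}" using b assms(2) Csub by blast
      hence ext: "i \<ge> n \<Longrightarrow> b i = undefined" unfolding space_def by (auto simp: PiE_def extensional_def)
      have "card {i \<in> {..<n}. b i \<noteq> 0} = 0" using h b unfolding hweight_def by simp
      hence "i < n \<Longrightarrow> b i = 0" by simp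
      thus "b i = (if i < n then 0 else undefined)" using ext by auto
    qed
    hence "B \<subseteq> {(\<lambda>i. if i < n then 0 else undefined)}" by auto
    hence "card B \<le> 1" using card_mono[of "{(\<lambda>i. if i < n then 0 else undefined)}" B] by auto
    moreover have "entropy_q q w = 0" using True unfolding entropy_q_def xlogx_def by simp
    ultimately show ?thesis using q2 unfolding q_def[symmetric] W_def[symmetric] N_def[symmetric] w_def[symmetric]
      by (simp add: N_def)
  next
    case False
    hence wpos: "w > 0" using w_ge by simp
    have npos: "n > 0" using wpos unfolding w_def by (cases n) auto
    define mu where "mu = w / ((q - 1) * (1 - w))"
    have mupos: "mu > 0" unfolding mu_def using wpos w_lt1 q2 by simp
    define L where "L = ln (1 + (q - 1) * mu)"
    have per: "\<And>j. j < s \<Longrightarrow> ln N + ln mu * (\<Sum>b\<in>B. real (wt (Is j) b)) / N \<le> real d * L"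
    proof -
      fix j assume j: "j < s"
      have fin: "finite (Is j)" using Isd j finite_subset by blast
      show "ln N + ln mu * (\<Sum>b\<in>B. real (wt (Is j) b)) / N \<le> real d * L"
        using proj_log[OF _ assms(2) fin mupos finB assms(3)] bij j Isd
        unfolding N_def L_def q_def by auto
    qed
    have "(\<Sum>j<s. ln N + ln mu * (\<Sum>b\<in>B. real (wt (Is j) b)) / N) \<le> (\<Sum>j<s. real d * L)"
      using per by (intro sum_mono) auto
    moreover have "(\<Sum>j<s. ln N + ln mu * (\<Sum>b\<in>B. real (wt (Is j) b)) / N)
        = real s * ln N + ln mu * (\<Sum>j<s. \<Sum>b\<in>B. real (wt (Is j) b)) / N"
      by (simp add: sum.distrib sum_distrib_left sum_divide_distrib)
    moreover have "(\<Sum>j<s. \<Sum>b\<in>B. real (wt (Is j) b)) = real t * W"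
    proof -
      have "(\<Sum>j<s. \<Sum>b\<in>B. real (wt (Is j) b)) = (\<Sum>b\<in>B. \<Sum>j<s. real (wt (Is j) b))"
        by (rule sum.swap)
      also have "\<dots> = (\<Sum>b\<in>B. real t * real (hweight n b))"
      proof (rule sum.cong[OF refl])
        fix b
        have "(\<Sum>j<s. wt (Is j) (b::nat\<Rightarrow>'f)) = t * hweight n b"
          by (rule wt_sum) (use Isd cnt in auto)
        hence "real (\<Sum>j<s. wt (Is j) (b::nat\<Rightarrow>'f)) = real (t * hweight n b)" by simp
        thus "(\<Sum>j<s. real (wt (Is j) b)) = real t * real (hweight n b)" by simp
      qed
      also have "\<dots> = real t * W" unfolding W_def by (simp add: sum_distrib_left)
      finally show ?thesis .
    qed
    moreover have sd: "real s * real d = real t * real n"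
      using card_sum[OF Isd cnt] by (metis of_nat_mult)
    ultimately have "real s * ln N + ln mu * (real t * W) / N \<le> real s * (real d * L)" by simp
    moreover have "real t * W / N = real s * real d * w"
      unfolding w_def using sd Npos npos by (simp add: field_simps)
    moreover have "ln mu * (real t * W) / N = ln mu * (real t * W / N)" by simp
    ultimately have "real s * (ln N + real d * w * ln mu) \<le> real s * (real d * L)"
      by (simp add: algebra_simps)
    hence "ln N + real d * w * ln mu \<le> real d * L"
      by (rule mult_left_le_imp_le) (use s1 in simp)
    hence key: "ln N \<le> real d * (L - w * ln mu)" by (simp add: algebra_simps)
    have Leq: "L = - ln (1 - w)"
    proof -
      have a: "q - 1 \<noteq> 0" "1 - w \<noteq> 0" using w_lt1 q2 by auto
      have "(q - 1) * mu = w / (1 - w)" unfolding mu_def using a by simp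
      moreover have "1 + w / (1 - w) = 1 / (1 - w)" using a by (simp add: field_simps)
      ultimately have "1 + (q - 1) * mu = 1 / (1 - w)" by simp
      thus ?thesis unfolding L_def using w_lt1 by (simp add: ln_div)
    qed
    have mueq: "ln mu = ln w - ln (q - 1) - ln (1 - w)"
      unfolding mu_def using wpos w_lt1 q2 by (simp add: ln_div ln_mult)
    have lnq: "ln q > 0" using q2 by simp
    have Heq: "entropy_q q w * ln q = w * ln (q - 1) - w * ln w - (1 - w) * ln (1 - w)"
      unfolding entropy_q_def xlogx_def log_def using wpos w_lt1 lnq by (simp add: field_simps)
    have "L - w * ln mu = entropy_q q w * ln q"
      unfolding Leq mueq using Heq by (simp add: algebra_simps)
    hence "ln N \<le> real d * entropy_q q w * ln q"
      using key by (simp add: mult.assoc)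
    hence "N \<le> exp (real d * entropy_q q w * ln q)"
      using Npos by (metis exp_ln exp_le_cancel_iff)
    thus ?thesis using q2 unfolding q_def[symmetric] W_def[symmetric] N_def[symmetric] w_def[symmetric]
      by (simp add: powr_def mult.assoc)
  qed
qed

end
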